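(* Let $\omega\in S_n$ and $1\le i<j\le n$ with $c_i(\omega),c_j(\omega)>0$. If $m_{i,p}(\omega)>m_{j,q}(\omega)$ for some $p\in[c_i(\omega)]$ and $q\in[c_j(\omega)]$, then $\{k: j<k\le n,\ \omega(i)>\omega(k)\}\subseteq\{l: j<l\le n,\ \omega(j)>\omega(l)\}$.
   Context: Permutations $\omega\in S_n$ are written in one-line notation. Let ${\rm Inv}(\omega)=\{(i,j): 1\le i<j\le n,\ \omega(i)>\omega(j)\}$, $c_i(\omega)=\#\{j: i<j\le n,\ \omega(i)>\omega(j)\}$, and for $i<j$, $c_{i,j}(\omega)=\#\{k: i<k<j,\ \omega(i)>\omega(k)\}$; $[m]=\{1,\dots,m\}$. For $i$ with $c_i(\omega)>0$ and $x\in[c_i(\omega)]$, $m_{i,x}(\omega)\in\mathbb{N}^n$ has $j$-th coordinate $0$ if $j<i$; $x$ if $j=i$; $0$ if $j>i$ and $(i,j)\in{\rm Inv}(\omega)$; $\max\{0,x-c_{i,j}(\omega)\}$ if $j>i$ and $(i,j)\notin{\rm Inv}(\omega)$. Comparisons are strict comparisons in the product order on $\mathbb{N}^n$. *)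

theory Defs
  imports "HOL-Combinatorics.Permutations"
begin

text \<open>Permutations of [n] = {1..n} are functions w with w permutes {1..n};
  w i is the i-th entry of the one-line notation.
  Vectors in N^n are functions nat => nat, coordinates 1..n.\<close>

definition Inv :: "nat \<Rightarrow> (nat \<Rightarrow> nat) \<Rightarrow> (nat \<times> nat) set" where
  "Inv n w = {(i, j). 1 \<le> i \<and> i < j \<and> j \<le> n \<and> w i > w j}"

definition c :: "nat \<Rightarrow> (nat \<Rightarrow> nat) \<Rightarrow> nat \<Rightarrow> nat" where
  "c n w i = card {j. i < j \<and> j \<le> n \<and> w i > w j}"

definition cij :: "(nat \<Rightarrow> nat) \<Rightarrow> nat \<Rightarrow> nat \<Rightarrow> nat" where
  "cij w i j = card {k. i < k \<and> k < j \<and> w i > w k}"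

definition mvec :: "nat \<Rightarrow> (nat \<Rightarrow> nat) \<Rightarrow> nat \<Rightarrow> nat \<Rightarrow> (nat \<Rightarrow> nat)" where
  "mvec n w i x = (\<lambda>j. if j < i then 0
                         else if j = i then x
                         else if (i, j) \<in> Inv n w then 0
                         else x - cij w i j)"

definition vless :: "nat \<Rightarrow> (nat \<Rightarrow> nat) \<Rightarrow> (nat \<Rightarrow> nat) \<Rightarrow> bool" where
  "vless n u v \<longleftrightarrow> (\<forall>k\<in>{1..n}. u k \<le> v k) \<and> (\<exists>k\<in>{1..n}. u k \<noteq> v k)"

end

theory Submission
  imports Defs
begin

theorem mainTheorem4:
  fixes n :: nat and w :: "nat \<Rightarrow> nat" and i j p q :: nat
  assumes "w permutes {1..n}"
    and "1 \<le> i" and "i < j" and "j \<le> n"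
    and "c n w i > 0" and "c n w j > 0"
    and "p \<in> {1..c n w i}" and "q \<in> {1..c n w j}"
    and "vless n (mvec n w j q) (mvec n w i p)"
  shows "{k. j < k \<and> k \<le> n \<and> w i > w k} \<subseteq> {l. j < l \<and> l \<le> n \<and> w j > w l}"
proof -
  have jr: "j \<in> {1..n}" using assms by auto
  have "mvec n w j q j \<le> mvec n w i p j" using assms(9) jr unfolding vless_def by blast
  hence le: "q \<le> mvec n w i p j" by (simp add: mvec_def)
  have "(i, j) \<notin> Inv n w"
  proof
    assume "(i, j) \<in> Inv n w"
    hence "mvec n w i p j = 0" using assms(3) by (simp add: mvec_def)
    thus False using le assms(8) by simp
  qed
  hence "\<not> w i > w j" using assms unfolding Inv_def by auto
  moreover have "w i \<noteq> w j" using permutes_inj[OF assms(1)] assms(3) unfolding inj_def by (metis less_irrefl)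
  ultimately have "w i < w j" by simp
  thus ?thesis by auto
qed

end
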